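(* Let $V_{Horn}$ be the set of matrices $A\in\partial\mathcal{CP}_5\cap\mathcal{DNN}_5^\circ$ that are orthogonal to some matrix of the form $DHD$ with $D$ a positive diagonal matrix. Then $V_{Horn}$ is the image of $Z_{Horn}$ under the map $\varphi: W\to Sym_5$, $\varphi(X)=XX^{\mathsf T}$.
   Context: $Sym_5$ is the space of real symmetric $5\times 5$ matrices with inner product $\langle A,B\rangle=\operatorname{trace}(A^{\mathsf T}B)$. $\mathcal{CP}_5$ is the cone of matrices $BB^{\mathsf T}$ with $B$ a real $5\times k$ matrix with nonnegative entries; $\mathcal{DNN}_5$ is the cone of positive semidefinite $5\times 5$ matrices with nonnegative entries; $\partial$ and ${}^\circ$ denote boundary and interior in the Euclidean topology. $H$ is the Horn matrix \[H=\begin{pmatrix} 1 & -1 &1& 1& -1 \\ -1 & 1& -1 &1& 1\\ 1 & -1 & 1 & -1 & 1\\ 1 & 1& -1&1& -1\\ -1&1&1&-1&1\end{pmatrix}.\] $W$ is the set of (nonnegative) $5\times 5$ matrices of the form \[\begin{pmatrix} y_{11}& 0&0& y_{41}& y_{51} \\ y_{12} & y_{22}& 0 &0& y_{52}\\ y_{13 }& y_{23}& y_{33} & 0& 0\\ 0 & y_{24}& y_{34}&y_{44}& 0\\ 0&0&y_{35}&y_{45}& y_{55}\end{pmatrix}.\] $Z_{Horn}\subset W$ is the set of all matrices $DB$ where $D$ is a diagonal matrix with positive diagonal entries and \[B = \begin{pmatrix} 1& 0&0& y_4& y_5+1 \\ y_1+1 & 1& 0 &0& y_5\\ y_1 & y_2+1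 & 1 & 0& 0\\ 0 & y_2& y_3+1&1& 0\\ 0&0&y_3&y_4+1&1\end{pmatrix}\operatorname{diag}(z_1,\dots,z_5)\] with $y_1,\dots,y_5,z_1,\dots,z_5$ positive reals. *)

theory Defs
  imports "HOL-Analysis.Analysis"
begin

type_synonym mat5 = "real^5^5"

text \<open>Matrices are real^5^5 with A $ i $ j the entry in row i, column j.
  Rows/columns are indexed 1,2,3,4,5 (numerals of type 5) in the order given by vector.\<close>

definition Sym5 :: "mat5 set" where
  "Sym5 = {A. transpose A = A}"

definition inner5 :: "mat5 \<Rightarrow> mat5 \<Rightarrow> real" where
  "inner5 A B = trace (transpose A ** B)"

text \<open>Completely positive cone: matrices B B^T with B a nonnegative 5 x k matrix;
  the columns of B are b 0, ..., b (k-1).\<close>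
definition CP5 :: "mat5 set" where
  "CP5 = {A. \<exists>(k::nat) (b::nat \<Rightarrow> real^5).
            (\<forall>l<k. \<forall>i. b l $ i \<ge> 0) \<and>
            A = (\<chi> i j. \<Sum>l<k. b l $ i * b l $ j)}"

definition psd5 :: "mat5 \<Rightarrow> bool" where
  "psd5 A \<longleftrightarrow> A \<in> Sym5 \<and> (\<forall>x::real^5. x \<bullet> (A *v x) \<ge> 0)"

definition DNN5 :: "mat5 set" where
  "DNN5 = {A. psd5 A \<and> (\<forall>i j. A $ i $ j \<ge> 0)}"

definition diag5 :: "(5 \<Rightarrow> real) \<Rightarrow> mat5" where
  "diag5 d = (\<chi> i j. if i = j then d i else 0)"

definition Horn :: mat5 where
  "Horn = vector [vector [ 1, -1,  1,  1, -1],
                  vector [-1,  1, -1,  1,  1],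
                  vector [ 1, -1,  1, -1,  1],
                  vector [ 1,  1, -1,  1, -1],
                  vector [-1,  1,  1, -1,  1]]"

definition W5 :: "mat5 set" where
  "W5 = {X. (\<forall>i j. X $ i $ j \<ge> 0) \<and>
            X $ 1 $ 2 = 0 \<and> X $ 1 $ 3 = 0 \<and>
            X $ 2 $ 3 = 0 \<and> X $ 2 $ 4 = 0 \<and>
            X $ 3 $ 4 = 0 \<and> X $ 3 $ 5 = 0 \<and>
            X $ 4 $ 1 = 0 \<and> X $ 4 $ 5 = 0 \<and>
            X $ 5 $ 1 = 0 \<and> X $ 5 $ 2 = 0}"

definition HornB :: "real \<Rightarrow> real \<Rightarrow> real \<Rightarrow> real \<Rightarrow> real \<Rightarrow> mat5" where
  "HornB y1 y2 y3 y4 y5 =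
     vector [vector [1,      0,      0,      y4,     y5 + 1],
             vector [y1 + 1, 1,      0,      0,      y5],
             vector [y1,     y2 + 1, 1,      0,      0],
             vector [0,      y2,     y3 + 1, 1,      0],
             vector [0,      0,      y3,     y4 + 1, 1]]"

definition Z_Horn :: "mat5 set" where
  "Z_Horn = {diag5 d ** (HornB y1 y2 y3 y4 y5 ** diag5 z) | d y1 y2 y3 y4 y5 z.
               (\<forall>i. d i > 0) \<and> (\<forall>i. z i > 0) \<and>
               y1 > 0 \<and> y2 > 0 \<and> y3 > 0 \<and> y4 > 0 \<and> y5 > 0}"

definition V_Horn :: "mat5 set" where
  "V_Horn = {A. A \<in> (top_of_set Sym5) frontier_of CP5 \<and>
                A \<in> (top_of_set Sym5) interior_of DNN5 \<and>
                (\<exists>d. (\<forall>i. d i > 0) \<and> inner5 A (diag5 d ** Horn ** diag5 d) = 0)}"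

definition phi5 :: "mat5 \<Rightarrow> mat5" where
  "phi5 X = X ** transpose X"

end

theory Submission imports Defs begin

lemma exhaust_5: fixes x :: 5 shows "x = 1 \<or> x = 2 \<or> x = 3 \<or> x = 4 \<or> x = 5"
proof (induct x)
  case (of_int z)
  then have "z = 0 \<or> z = 1 \<or> z = 2 \<or> z = 3 \<or> z = 4" by fastforce
  then show ?case by auto
qed

lemma UNIV_5: "(UNIV::5 set) = {1,2,3,4,5}" using exhaust_5 by auto
lemma sum_5: "sum f (UNIV::5 set) = f 1 + f 2 + f 3 + f 4 + f 5"
  unfolding UNIV_5 by (simp add: ac_simps)
lemma forall_5: "(\<forall>i::5. P i) \<longleftrightarrow> P 1 \<and> P 2 \<and> P 3 \<and> P 4 \<and> P 5"
  by (metis exhaust_5)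
lemma ex_5: "(\<exists>i::5. P i) \<longleftrightarrow> P 1 \<or> P 2 \<or> P 3 \<or> P 4 \<or> P 5"
  by (metis exhaust_5)

lemma vector_5 [simp]:
 "(vector [a,b,c,d,e] ::('a::zero)^5)$1 = a"
 "(vector [a,b,c,d,e] ::('a::zero)^5)$2 = b"
 "(vector [a,b,c,d,e] ::('a::zero)^5)$3 = c"
 "(vector [a,b,c,d,e] ::('a::zero)^5)$4 = d"
 "(vector [a,b,c,d,e] ::('a::zero)^5)$5 = e"
  unfolding vector_def by simp_all

lemma test: "(3::5) + 4 = 2" "(1::5) - 2 = 4" "(2::5) \<noteq> 4" "(5::5) = 0" "(4::5)+1 = 5"
  by simp_all

lemma five_red [simp]: "(6::5) = 1" "(7::5) = 2" "(8::5) = 3" "(9::5) = 4" "(10::5) = 5"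
  by simp_all

definition Q :: "real^5 \<Rightarrow> real" where "Q x = x \<bullet> (Horn *v x)"

lemma Q_expand: "Q x = (x$1)^2 + (x$2)^2 + (x$3)^2 + (x$4)^2 + (x$5)^2
   - 2*x$1*x$2 + 2*x$1*x$3 + 2*x$1*x$4 - 2*x$1*x$5 - 2*x$2*x$3 + 2*x$2*x$4 + 2*x$2*x$5
   - 2*x$3*x$4 + 2*x$3*x$5 - 2*x$4*x$5"
  unfolding Q_def Horn_def inner_vec_def matrix_vector_mult_def sum_5
  by (simp add: algebra_simps power2_eq_square)


definition qf :: "real \<Rightarrow> real \<Rightarrow> real \<Rightarrow> real \<Rightarrow> real \<Rightarrow> real" where
 "qf x1 x2 x3 x4 x5 = x1^2 + x2^2 + x3^2 + x4^2 + x5^2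
   - 2*x1*x2 + 2*x1*x3 + 2*x1*x4 - 2*x1*x5 - 2*x2*x3 + 2*x2*x4 + 2*x2*x5
   - 2*x3*x4 + 2*x3*x5 - 2*x4*x5"

lemma qf_id1: "qf x1 x2 x3 x4 x5 = (x1-x2+x3+x4-x5)^2 + 4*x2*x4 + 4*x3*(x5-x4)"
  unfolding qf_def by (simp add: algebra_simps power2_eq_square)
lemma qf_id2: "qf x1 x2 x3 x4 x5 = (x1-x2+x3-x4+x5)^2 + 4*x2*x5 + 4*x1*(x4-x5)"
  unfolding qf_def by (simp add: algebra_simps power2_eq_square)

lemma qf_nonneg:
  assumes "x1 \<ge> 0" "x2 \<ge> 0" "x3 \<ge> 0" "x4 \<ge> 0" "x5 \<ge> 0"
  shows "qf x1 x2 x3 x4 x5 \<ge> 0"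
proof (cases "x4 \<le> x5")
  case True
  then show ?thesis unfolding qf_id1 using assms by (intro add_nonneg_nonneg) auto
next
  case False
  then show ?thesis unfolding qf_id2 using assms by (intro add_nonneg_nonneg) auto
qed

lemma qf_zero:
  assumes "x1 \<ge> 0" "x2 \<ge> 0" "x3 \<ge> 0" "x4 \<ge> 0" "x5 \<ge> 0" "qf x1 x2 x3 x4 x5 = 0"
  shows "(x4 = 0 \<and> x5 = 0 \<and> x2 = x1 + x3) \<or> (x5 = 0 \<and> x1 = 0 \<and> x3 = x2 + x4) \<or>
         (x1 = 0 \<and> x2 = 0 \<and> x4 = x3 + x5) \<or> (x2 = 0 \<and> x3 = 0 \<and> x5 = x4 + x1) \<or>
         (x3 = 0 \<and> x4 = 0 \<and> x1 = x5 + x2)"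
proof (cases "x4 \<le> x5")
  case True
  let ?a = "(x1-x2+x3+x4-x5)^2" and ?b = "4*x2*x4" and ?c = "4*x3*(x5-x4)"
  have ge: "?a \<ge> 0" "?b \<ge> 0" "?c \<ge> 0" using assms True by auto
  have "?a + ?b + ?c = 0" using assms(6) unfolding qf_id1 .
  then have "?a = 0" "?b = 0" "?c = 0" using ge by linarith+
  then have e1: "x1-x2+x3+x4-x5 = 0" and e2: "x2 = 0 \<or> x4 = 0" and e3: "x3 = 0 \<or> x5 = x4" by auto
  from e2 show ?thesis
  proof
    assume h: "x2 = 0"
    from e3 show ?thesis
    proof
      assume "x3 = 0" then have "x5 = x4 + x1" using e1 h by linarith
      then show ?thesis using h \<open>x3 = 0\<close> by blast
    next
      assume h2: "x5 = x4" then have "x1 = 0" "x3 = 0" using e1 h assms by linarith+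
      then show ?thesis using h h2 by simp
    qed
  next
    assume h: "x4 = 0"
    from e3 show ?thesis
    proof
      assume "x3 = 0" then have "x1 = x5 + x2" using e1 h by linarith
      then show ?thesis using h \<open>x3 = 0\<close> by blast
    next
      assume h2: "x5 = x4" then have "x2 = x1 + x3" using e1 h by linarith
      then show ?thesis using h h2 by simp
    qed
  qed
next
  case False
  let ?a = "(x1-x2+x3-x4+x5)^2" and ?b = "4*x2*x5" and ?c = "4*x1*(x4-x5)"
  have ge: "?a \<ge> 0" "?b \<ge> 0" "?c \<ge> 0" using assms False by auto
  have "?a + ?b + ?c = 0" using assms(6) unfolding qf_id2 .
  then have "?a = 0" "?b = 0" "?c = 0" using ge by linarith+
  then have e1: "x1-x2+x3-x4+x5 = 0" and e2: "x2 = 0 \<or> x5 = 0" and e3: "x1 = 0" using False by auto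
  from e2 show ?thesis
  proof
    assume h: "x2 = 0" then have "x4 = x3 + x5" using e1 e3 by linarith
    then show ?thesis using h e3 by blast
  next
    assume h: "x5 = 0" then have "x3 = x2 + x4" using e1 e3 by linarith
    then show ?thesis using h e3 by blast
  qed
qed

definition pat :: "5 \<Rightarrow> real^5 \<Rightarrow> bool" where
  "pat s x \<longleftrightarrow> x$(s+3) = 0 \<and> x$(s+4) = 0 \<and> x$(s+1) = x$s + x$(s+2)"

lemma Q_qf: "Q x = qf (x$1) (x$2) (x$3) (x$4) (x$5)"
  unfolding Q_expand qf_def ..

lemma Q_nonneg: "(\<And>i. x$i \<ge> 0) \<Longrightarrow> Q x \<ge> 0"
  unfolding Q_qf by (rule qf_nonneg) auto

lemma Q_zero: assumes "\<And>i. x$i \<ge> 0" "Q x = 0" shows "\<exists>s. pat s x"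
proof -
  have "(x$4 = 0 \<and> x$5 = 0 \<and> x$2 = x$1 + x$3) \<or> (x$5 = 0 \<and> x$1 = 0 \<and> x$3 = x$2 + x$4) \<or>
         (x$1 = 0 \<and> x$2 = 0 \<and> x$4 = x$3 + x$5) \<or> (x$2 = 0 \<and> x$3 = 0 \<and> x$5 = x$4 + x$1) \<or>
         (x$3 = 0 \<and> x$4 = 0 \<and> x$1 = x$5 + x$2)"
    by (rule qf_zero) (use assms in \<open>auto simp: Q_qf\<close>)
  then show ?thesis unfolding pat_def ex_5
    by (elim disjE) (simp_all add: ac_simps)
qed

lemma pat_Q: "pat s x \<Longrightarrow> Q x = 0"
  using exhaust_5[of s] unfolding pat_def Q_qf
  by (elim disjE) (simp_all add: qf_def power2_eq_square algebra_simps)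


lemma inner5_expand: "inner5 A B = (\<Sum>i\<in>UNIV. \<Sum>j\<in>UNIV. A$i$j * B$i$j)"
  unfolding inner5_def trace_def matrix_matrix_mult_def transpose_def
  by simp (rule sum.swap)

lemma diag_mult_left: "(diag5 e ** M) $ i $ j = e i * M $ i $ j"
proof -
  have "(diag5 e ** M) $ i $ j = (\<Sum>k\<in>UNIV. (if i = k then e i else 0) * M$k$j)"
    unfolding diag5_def matrix_matrix_mult_def by simp
  also have "\<dots> = (\<Sum>k\<in>UNIV. if k = i then e i * M$i$j else 0)"
    by (rule sum.cong) auto
  finally show ?thesis by simp
qed

lemma diag_mult_right: "(M ** diag5 e) $ i $ j = M $ i $ j * e j"
proof -
  have "(M ** diag5 e) $ i $ j = (\<Sum>k\<in>UNIV. M$i$k * (if k = j then e k else 0))"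
    unfolding diag5_def matrix_matrix_mult_def by simp
  also have "\<dots> = (\<Sum>k\<in>UNIV. if k = j then M$i$j * e j else 0)"
    by (rule sum.cong) auto
  finally show ?thesis by simp
qed

lemma DHD_entry: "(diag5 e ** Horn ** diag5 e) $ i $ j = e i * Horn $ i $ j * e j"
  by (simp add: diag_mult_left diag_mult_right)

definition outer :: "real^5 \<Rightarrow> mat5" where "outer b = (\<chi> i j. b$i * b$j)"

lemma inner_outer_DHD:
  "inner5 (outer b) (diag5 e ** Horn ** diag5 e) = Q (\<chi> i. e i * b$i)"
proof -
  have "Q (\<chi> i. e i * b$i) = (\<Sum>i\<in>UNIV. \<Sum>j\<in>UNIV. (e i * b$i) * (Horn$i$j * (e j * b$j)))"
    unfolding Q_def inner_vec_def matrix_vector_mult_def by (simp add: sum_distrib_left)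
  also have "\<dots> = (\<Sum>i\<in>UNIV. \<Sum>j\<in>UNIV. outer b $i$j * (diag5 e ** Horn ** diag5 e)$i$j)"
    unfolding DHD_entry outer_def by (intro sum.cong refl) (simp add: mult_ac)
  finally show ?thesis unfolding inner5_expand by simp
qed

lemma inner5_sum_left: "inner5 (\<Sum>l\<in>L. f l) B = (\<Sum>l\<in>L. inner5 (f l) B)"
proof -
  have "inner5 (\<Sum>l\<in>L. f l) B = (\<Sum>i\<in>UNIV. \<Sum>j\<in>UNIV. \<Sum>l\<in>L. f l $i$j * B$i$j)"
    unfolding inner5_expand by (simp add: sum_distrib_right)
  also have "\<dots> = (\<Sum>i\<in>UNIV. \<Sum>l\<in>L. \<Sum>j\<in>UNIV. f l $i$j * B$i$j)"
    by (rule sum.cong[OF refl], rule sum.swap)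
  also have "\<dots> = (\<Sum>l\<in>L. \<Sum>i\<in>UNIV. \<Sum>j\<in>UNIV. f l $i$j * B$i$j)"
    by (rule sum.swap)
  finally show ?thesis unfolding inner5_expand .
qed

lemma CP_form: "(\<chi> i j. \<Sum>l<k. b l $ i * b l $ j) = (\<Sum>l<k. outer (b l))"
  unfolding outer_def by (simp add: vec_eq_iff)


lemma CP5_alt: "A \<in> CP5 \<longleftrightarrow> (\<exists>(k::nat) b. (\<forall>l<k. \<forall>i. 0 \<le> b l $ i) \<and> A = (\<Sum>l<k. outer (b l)))"
  unfolding CP5_def CP_form by simp

lemma sum_lessThan_concat: "(\<Sum>l<k1+k2. f l) = (\<Sum>l<k1. f l) + (\<Sum>l<k2. f (k1 + l))"
  for f :: "nat \<Rightarrow> 'a::comm_monoid_add"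
  by (induct k2) (simp_all add: add.assoc)

lemma CP5_add: assumes "A \<in> CP5" "B \<in> CP5" shows "A + B \<in> CP5"
proof -
  obtain k :: nat and b where b: "\<forall>l<k. \<forall>i. 0 \<le> b l $ i" "A = (\<Sum>l<k. outer (b l))" using assms(1) CP5_alt by blast
  obtain k' :: nat and b' where b': "\<forall>l<k'. \<forall>i. 0 \<le> b' l $ i" "B = (\<Sum>l<k'. outer (b' l))" using assms(2) CP5_alt by blast
  define c where "c l = (if l < k then b l else b' (l - k))" for l
  have "A + B = (\<Sum>l<k+k'. outer (c l))"
    using b b' unfolding sum_lessThan_concat c_def by simp
  moreover have "\<forall>l<k+k'. \<forall>i. 0 \<le> c l $ i" using b b' unfolding c_def by auto
  ultimately show ?thesis unfolding CP5_alt by blast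
qed

lemma outer_scale: assumes "0 \<le> c" shows "outer (sqrt c *\<^sub>R v) = c *\<^sub>R outer v"
proof -
  have "sqrt c * x * (sqrt c * y) = c * (x * y)" for x y
  proof -
    have "sqrt c * x * (sqrt c * y) = (sqrt c * sqrt c) * (x * y)" by (simp add: mult_ac)
    also have "sqrt c * sqrt c = c" using assms by simp
    finally show ?thesis .
  qed
  then show ?thesis unfolding outer_def by (simp add: vec_eq_iff)
qed

lemma CP5_scale: assumes "A \<in> CP5" "0 \<le> c" shows "c *\<^sub>R A \<in> CP5"
proof -
  obtain k :: nat and b where b: "\<forall>l<k. \<forall>i. 0 \<le> b l $ i" "A = (\<Sum>l<k. outer (b l))" using assms(1) CP5_alt by blast
  have e: "c *\<^sub>R A = (\<Sum>l<k. outer (sqrt c *\<^sub>R b l))"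
    unfolding b(2) scaleR_sum_right outer_scale[OF assms(2)] ..
  have n: "\<forall>l<k. \<forall>i. 0 \<le> (sqrt c *\<^sub>R b l) $ i"
    using b(1) assms(2) by simp
  show ?thesis unfolding CP5_alt
    by (rule exI[of _ k], rule exI[of _ "\<lambda>l. sqrt c *\<^sub>R b l"]) (use e n in simp)
qed

lemma CP5_outer: "(\<And>i. 0 \<le> b $ i) \<Longrightarrow> outer b \<in> CP5"
  unfolding CP5_alt
  by (rule exI[of _ 1], rule exI[of _ "\<lambda>_. b"]) simp

lemma convex_CP5: "convex CP5"
  unfolding convex_def by (intro ballI allI impI CP5_add CP5_scale) auto

lemma conic_CP5: "conic CP5"
  unfolding conic_def by (intro allI impI CP5_scale) auto

definition Sset :: "mat5 set" where
  "Sset = outer ` {b. (\<forall>i. 0 \<le> b$i) \<and> norm b = 1}"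

lemma compact_Sset: "compact Sset"
proof -
  have "compact {b::real^5. (\<forall>i. 0 \<le> b$i) \<and> norm b = 1}"
  unfolding compact_eq_bounded_closed
  proof
    show "bounded {b::real^5. (\<forall>i. 0 \<le> b$i) \<and> norm b = 1}"
      by (rule bounded_subset[OF bounded_cball[of 0 1]]) auto
    show "closed {b::real^5. (\<forall>i. 0 \<le> b$i) \<and> norm b = 1}"
    proof -
      have "{b::real^5. (\<forall>i. 0 \<le> b$i) \<and> norm b = 1} = {x::real^5. \<forall>i. 0 \<le>x$i} \<inter> sphere 0 1"
        by auto
      then show ?thesis using closed_Int[OF closed_positive_orthant closed_sphere] by simp
    qed
  qed
  moreover have "continuous_on UNIV outer"
    unfolding outer_def
    by (intro continuous_on_vec_lambda continuous_on_mult continuous_on_component continuous_on_id)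
  ultimately show ?thesis unfolding Sset_def
    using compact_continuous_image continuous_on_subset by blast
qed

lemma inner_mat1: "(M::mat5) \<bullet> mat 1 = (\<Sum>i\<in>UNIV. M$i$i)"
proof -
  have "(\<Sum>j\<in>UNIV. M$i$j * (mat 1 :: mat5)$i$j) = M$i$i" for i
  proof -
    have "(\<Sum>j\<in>UNIV. M$i$j * (mat 1 :: mat5)$i$j) = (\<Sum>j\<in>UNIV. if j = i then M$i$i else 0)"
      by (rule sum.cong) (auto simp: mat_def)
    then show ?thesis by simp
  qed
  then show ?thesis unfolding inner_vec_def by simp
qed

lemma Sset_trace: "Sset \<subseteq> {M. M \<bullet> mat 1 = 1}"
proof
  fix M assume "M \<in> Sset"
  then obtain b where b: "norm b = 1" "M = outer b" unfolding Sset_def by auto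
  have "M \<bullet> mat 1 = (\<Sum>i\<in>UNIV. M$i$i)" by (rule inner_mat1)
  also have "\<dots> = b \<bullet> b" unfolding b outer_def inner_vec_def by simp
  also have "\<dots> = 1" using b by (simp add: norm_eq_sqrt_inner)
  finally show "M \<in> {M. M \<bullet> mat 1 = 1}" by simp
qed

lemma zero_notin_hull: "(0::mat5) \<notin> convex hull Sset"
proof -
  have "convex hull Sset \<subseteq> {M. M \<bullet> mat 1 = 1}"
  proof (rule hull_minimal[OF Sset_trace])
    show "convex {M::mat5. M \<bullet> mat 1 = 1}" using convex_hyperplane[of "mat 1" 1] by (simp add: inner_commute)
  qed
  then show ?thesis by auto
qed

lemma closed_K: "closed (conic hull (convex hull Sset))"
  by (rule closed_conic_hull) (simp add: compact_convex_hull compact_Sset zero_notin_hull)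

lemma K_sub_CP5: "conic hull (convex hull Sset) \<subseteq> CP5"
proof -
  have "Sset \<subseteq> CP5" unfolding Sset_def using CP5_outer by auto
  then have "convex hull Sset \<subseteq> CP5" using convex_CP5 by (rule hull_minimal)
  then show ?thesis using conic_CP5 by (rule hull_minimal)
qed


lemma outer_scaleR: "outer (c *\<^sub>R v) = (c * c) *\<^sub>R outer v"
  unfolding outer_def by (simp add: vec_eq_iff mult_ac)

lemma outer_zero: "outer 0 = 0"
  unfolding outer_def by (simp add: vec_eq_iff)

lemma Sset_ne: "Sset \<noteq> {}"
proof -
  have "outer (axis 1 1) \<in> Sset" unfolding Sset_def
  proof (rule imageI, safe)
    show "0 \<le> axis 1 (1::real) $ i" for i :: 5 by (simp add: axis_def)
    show "norm (axis 1 (1::real)) = 1" by simp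
  qed
  then show ?thesis by blast
qed

lemma CP5_sub_K: "CP5 \<subseteq> conic hull (convex hull Sset)"
proof
  fix A assume "A \<in> CP5"
  then obtain k :: nat and b where b: "\<forall>l<k. \<forall>i. 0 \<le> b l $ i" "A = (\<Sum>l<k. outer (b l))"
    using CP5_alt by blast
  define L where "L = {l. l < k \<and> b l \<noteq> 0}"
  have finL: "finite L" unfolding L_def by simp
  have AL: "A = (\<Sum>l\<in>L. outer (b l))"
    unfolding b(2) by (rule sum.mono_neutral_right) (auto simp: L_def outer_zero)
  show "A \<in> conic hull (convex hull Sset)"
  proof (cases "L = {}")
    case True
    then have "A = 0" using AL by simp
    then show ?thesis using Sset_ne by simp
  next
    case False
    define t where "t = (\<Sum>l\<in>L. norm (b l) * norm (b l))"
    have npos: "norm (b l) > 0" if "l \<in> L" for l using that unfolding L_def by simp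
    have tpos: "t > 0" unfolding t_def using False finL npos
      by (intro sum_pos) auto
    define u where "u l = (1 / norm (b l)) *\<^sub>R b l" for l
    have ub: "outer (b l) = (norm (b l) * norm (b l)) *\<^sub>R outer (u l)" if "l \<in> L" for l
      using npos[OF that] unfolding u_def outer_scaleR by simp
    have uS: "outer (u l) \<in> Sset" if "l \<in> L" for l
      unfolding Sset_def
    proof (rule imageI, safe)
      show "0 \<le> u l $ i" for i
      proof -
        have "l < k" using that unfolding L_def by simp
        then have "0 \<le> b l $ i" using b(1) by simp
        then show ?thesis unfolding u_def by simp
      qed
      show "norm (u l) = 1" unfolding u_def using npos[OF that] by simp
    qed
    have conv: "(\<Sum>l\<in>L. ((norm (b l) * norm (b l)) / t) *\<^sub>R outer (u l)) \<in> convex hull Sset"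
    proof (rule convex_sum[OF finL convex_convex_hull])
      show "(\<Sum>l\<in>L. norm (b l) * norm (b l) / t) = 1"
        unfolding sum_divide_distrib[symmetric] t_def[symmetric] using tpos by simp
      show "\<And>l. l \<in> L \<Longrightarrow> 0 \<le> norm (b l) * norm (b l) / t" using tpos by simp
      show "\<And>l. l \<in> L \<Longrightarrow> outer (u l) \<in> convex hull Sset" by (rule hull_inc[OF uS])
    qed
    define X where "X = (\<Sum>l\<in>L. ((norm (b l) * norm (b l)) / t) *\<^sub>R outer (u l))"
    have "A = t *\<^sub>R X"
      unfolding AL X_def scaleR_sum_right using tpos ub by (intro sum.cong refl) simp
    then have "A = t *\<^sub>R X \<and> 0 \<le> t \<and> X \<in> convex hull Sset" using conv tpos unfolding X_def by simp
    then have "\<exists>c x. A = c *\<^sub>R x \<and> 0 \<le> c \<and> x \<in> convex hull Sset" by (intro exI)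
    then show ?thesis unfolding conic_hull_explicit by simp
  qed
qed

lemma closed_CP5: "closed CP5"
proof -
  have "CP5 = conic hull (convex hull Sset)" using CP5_sub_K K_sub_CP5 by (rule antisym)
  then show ?thesis using closed_K by simp
qed


lemma five_more [simp]: "(11::5) = 1" "(12::5) = 2" "(13::5) = 3" "(14::5) = 4" "(15::5) = 5" by simp_all

lemma p41 [simp]: "(i::5) + 4 + 1 = i" using exhaust_5[of i] by (elim disjE) simp_all
lemma p32 [simp]: "(i::5) + 3 + 2 = i" using exhaust_5[of i] by (elim disjE) simp_all
lemma p42 [simp]: "(i::5) + 4 + 2 = i + 1" using exhaust_5[of i] by (elim disjE) simp_all

lemma pat_F1: assumes "pat s x"
  shows "x$i * x$(i+2) = (if s = i then x$s * x$(s+2) else 0)"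
  using assms exhaust_5[of s] exhaust_5[of i] unfolding pat_def
  by (elim disjE) simp_all

lemma pat_F2: assumes "pat s x"
  shows "x$i * x$(i+1) - x$i * x$(i+2) - x$(i+4) * x$(i+1) =
    (if s = i then (x$s)^2 else 0) + (if s = i+4 then (x$(s+2))^2 else 0)"
  using assms exhaust_5[of s] exhaust_5[of i] unfolding pat_def
  by (elim disjE) (simp_all add: algebra_simps power2_eq_square)


lemma outer_sum_entry: "(\<Sum>l<k. outer (x l)) $ i $ j = (\<Sum>l<k. x l $ i * x l $ j)"
  unfolding outer_def by simp

lemma face_decomp:
  fixes x :: "nat \<Rightarrow> real^5"
  assumes pats: "\<forall>l<k. \<exists>s. pat s (x l)"
    and M: "M = (\<Sum>l<k. outer (x l))"
  shows "\<exists>P Qv. (\<forall>i. P i \<ge> 0) \<and> (\<forall>i. Qv i \<ge> 0) \<and> (\<forall>i. (M$i$(i+2))^2 \<le> P i * Qv i) \<and>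
     (\<forall>i. M$i$(i+1) - M$i$(i+2) - M$(i+4)$(i+1) = P i + Qv (i+4))"
proof -
  define sel where "sel l = (SOME s. pat s (x l))" for l
  have sel: "pat (sel l) (x l)" if "l < k" for l
    unfolding sel_def using pats that by (metis someI_ex)
  define I where "I i = {l\<in>{..<k}. sel l = i}" for i
  define P where "P i = (\<Sum>l\<in>I i. (x l $ i)^2)" for i
  define Qv where "Qv i = (\<Sum>l\<in>I i. (x l $ (i+2))^2)" for i
  have R: "M$i$(i+2) = (\<Sum>l\<in>I i. x l $ i * x l $ (i+2))" for i
  proof -
    have "M$i$(i+2) = (\<Sum>l<k. x l $ i * x l $ (i+2))" unfolding M outer_sum_entry ..
    also have "\<dots> = (\<Sum>l<k. if sel l = i then x l $ i * x l $ (i+2) else 0)"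
    proof (rule sum.cong[OF refl])
      fix l assume "l \<in> {..<k}"
      then have "pat (sel l) (x l)" using sel by simp
      from pat_F1[OF this, of i]
      show "x l $ i * x l $ (i+2) = (if sel l = i then x l $ i * x l $ (i+2) else 0)"
        by (cases "sel l = i") simp_all
    qed
    also have "\<dots> = (\<Sum>l\<in>I i. x l $ i * x l $ (i+2))"
      unfolding I_def by (rule sum.inter_filter[symmetric]) simp
    finally show ?thesis .
  qed
  have F: "M$i$(i+1) - M$i$(i+2) - M$(i+4)$(i+1) = P i + Qv (i+4)" for i
  proof -
    have "M$i$(i+1) - M$i$(i+2) - M$(i+4)$(i+1) =
      (\<Sum>l<k. x l $ i * x l $ (i+1) - x l $ i * x l $ (i+2) - x l $ (i+4) * x l $ (i+1))"
      unfolding M outer_sum_entry by (simp add: sum_subtractf)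
    also have "\<dots> = (\<Sum>l<k. (if sel l = i then (x l $ i)^2 else 0) + (if sel l = i+4 then (x l $ (i+4+2))^2 else 0))"
    proof (rule sum.cong[OF refl])
      fix l assume "l \<in> {..<k}"
      then have "pat (sel l) (x l)" using sel by simp
      from pat_F2[OF this, of i]
      show "x l $ i * x l $ (i+1) - x l $ i * x l $ (i+2) - x l $ (i+4) * x l $ (i+1) =
        (if sel l = i then (x l $ i)^2 else 0) + (if sel l = i+4 then (x l $ (i+4+2))^2 else 0)"
        by (cases "sel l = i"; cases "sel l = i+4") simp_all
    qed
    also have "\<dots> = P i + Qv (i+4)"
      unfolding P_def Qv_def I_def sum.distrib
      by (simp only: sum.inter_filter[symmetric] finite_lessThan)
    finally show ?thesis .
  qed
  have P0: "\<forall>i. P i \<ge> 0" unfolding P_def by (simp add: sum_nonneg)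
  have Q0: "\<forall>i. Qv i \<ge> 0" unfolding Qv_def by (simp add: sum_nonneg)
  have CS: "\<forall>i. (M$i$(i+2))^2 \<le> P i * Qv i"
    unfolding R P_def Qv_def by (simp add: Cauchy_Schwarz_ineq_sum)
  show ?thesis
    by (rule exI[of _ P], rule exI[of _ Qv]) (use P0 Q0 CS F in simp)
qed


lemma pat_F3: assumes "pat s x"
  shows "x$i * x$i = x$i * x$(i+1) + x$(i+4) * x$i - x$i * x$(i+2) - x$(i+3) * x$i"
  using assms exhaust_5[of s] exhaust_5[of i] unfolding pat_def
  by (elim disjE) (simp_all add: algebra_simps)

lemma face_diag:
  assumes "finite L" "\<And>l. l \<in> L \<Longrightarrow> \<exists>s. pat s (x l)"
  shows "(\<Sum>l\<in>L. outer (x l)) $ i $ i = (\<Sum>l\<in>L. outer (x l)) $ i $ (i+1) + (\<Sum>l\<in>L. outer (x l)) $ (i+4) $ i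
     - (\<Sum>l\<in>L. outer (x l)) $ i $ (i+2) - (\<Sum>l\<in>L. outer (x l)) $ (i+3) $ i"
proof -
  have "(\<Sum>l\<in>L. outer (x l)) $ i $ i = (\<Sum>l\<in>L. x l $ i * x l $ i)" unfolding outer_def by simp
  also have "\<dots> = (\<Sum>l\<in>L. x l $ i * x l $ (i+1) + x l $ (i+4) * x l $ i - x l $ i * x l $ (i+2) - x l $ (i+3) * x l $ i)"
  proof (rule sum.cong[OF refl])
    fix l assume "l \<in> L"
    then obtain s where "pat s (x l)" using assms(2) by blast
    then show "x l $ i * x l $ i = x l $ i * x l $ (i+1) + x l $ (i+4) * x l $ i - x l $ i * x l $ (i+2) - x l $ (i+3) * x l $ i"
      by (rule pat_F3)
  qed
  also have "\<dots> = (\<Sum>l\<in>L. outer (x l)) $ i $ (i+1) + (\<Sum>l\<in>L. outer (x l)) $ (i+4) $ i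
     - (\<Sum>l\<in>L. outer (x l)) $ i $ (i+2) - (\<Sum>l\<in>L. outer (x l)) $ (i+3) $ i"
    unfolding outer_def by (simp add: sum.distrib sum_subtractf)
  finally show ?thesis .
qed

lemma outer_sum_sym: "(\<Sum>l\<in>L. outer (x l)) $ i $ j = (\<Sum>l\<in>L. outer (x l)) $ j $ i"
  unfolding outer_def by (simp add: mult.commute)

lemma idx_cases: fixes i j :: 5 shows "j = i \<or> j = i+1 \<or> j = i+2 \<or> i = j+2 \<or> i = j+1"
  using exhaust_5[of i] exhaust_5[of j] by (elim disjE) simp_all

lemma face_eq:
  fixes F G :: mat5
  assumes symF: "\<And>i j. F$i$j = F$j$i" and symG: "\<And>i j. G$i$j = G$j$i"
    and dF: "\<And>i. F$i$i = F$i$(i+1) + F$(i+4)$i - F$i$(i+2) - F$(i+3)$i"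
    and dG: "\<And>i. G$i$i = G$i$(i+1) + G$(i+4)$i - G$i$(i+2) - G$(i+3)$i"
    and e1: "\<And>i. F$i$(i+1) = G$i$(i+1)" and e2: "\<And>i. F$i$(i+2) = G$i$(i+2)"
  shows "F = G"
proof -
  have e1': "F$(i+4)$i = G$(i+4)$i" for i using e1[of "i+4"] by simp
  have e2': "F$(i+3)$i = G$(i+3)$i" for i using e2[of "i+3"] by simp
  have c1: "F$i$i = G$i$i" for i using dF[of i] dG[of i] e1 e2 e1' e2' by simp
  have c4: "F$(j+2)$j = G$(j+2)$j" for j using e2[of j] symF[of "j+2" j] symG[of "j+2" j] by simp
  have c5: "F$(j+1)$j = G$(j+1)$j" for j using e1[of j] symF[of "j+1" j] symG[of "j+1" j] by simp
  have "F$i$j = G$i$j" for i j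
    using idx_cases[of i j] c1 e1 e2 c4 c5 by (elim disjE) simp_all
  then show ?thesis by (simp add: vec_eq_iff)
qed

lemma Sym5_iff: "A \<in> Sym5 \<longleftrightarrow> (\<forall>i j. A$i$j = A$j$i)"
  unfolding Sym5_def transpose_def by (auto simp: vec_eq_iff)

lemma HornB_entries:
  "HornB y1 y2 y3 y4 y5 $1$1 = 1" "HornB y1 y2 y3 y4 y5 $1$2 = 0" "HornB y1 y2 y3 y4 y5 $1$3 = 0"
  "HornB y1 y2 y3 y4 y5 $1$4 = y4" "HornB y1 y2 y3 y4 y5 $1$5 = y5 + 1"
  "HornB y1 y2 y3 y4 y5 $2$1 = y1 + 1" "HornB y1 y2 y3 y4 y5 $2$2 = 1" "HornB y1 y2 y3 y4 y5 $2$3 = 0"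
  "HornB y1 y2 y3 y4 y5 $2$4 = 0" "HornB y1 y2 y3 y4 y5 $2$5 = y5"
  "HornB y1 y2 y3 y4 y5 $3$1 = y1" "HornB y1 y2 y3 y4 y5 $3$2 = y2 + 1" "HornB y1 y2 y3 y4 y5 $3$3 = 1"
  "HornB y1 y2 y3 y4 y5 $3$4 = 0" "HornB y1 y2 y3 y4 y5 $3$5 = 0"
  "HornB y1 y2 y3 y4 y5 $4$1 = 0" "HornB y1 y2 y3 y4 y5 $4$2 = y2" "HornB y1 y2 y3 y4 y5 $4$3 = y3 + 1"
  "HornB y1 y2 y3 y4 y5 $4$4 = 1" "HornB y1 y2 y3 y4 y5 $4$5 = 0"
  "HornB y1 y2 y3 y4 y5 $5$1 = 0" "HornB y1 y2 y3 y4 y5 $5$2 = 0" "HornB y1 y2 y3 y4 y5 $5$3 = y3"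
  "HornB y1 y2 y3 y4 y5 $5$4 = y4 + 1" "HornB y1 y2 y3 y4 y5 $5$5 = 1"
  unfolding HornB_def by simp_all

definition yv :: "real \<Rightarrow> real \<Rightarrow> real \<Rightarrow> real \<Rightarrow> real \<Rightarrow> 5 \<Rightarrow> real" where
  "yv y1 y2 y3 y4 y5 k = (if k = 1 then y1 else if k = 2 then y2 else if k = 3 then y3 else if k = 4 then y4 else y5)"

lemma HornB_col: "HornB y1 y2 y3 y4 y5 $ k $ k = 1 \<and> HornB y1 y2 y3 y4 y5 $ (k+1) $ k = yv y1 y2 y3 y4 y5 k + 1 \<and>
   HornB y1 y2 y3 y4 y5 $ (k+2) $ k = yv y1 y2 y3 y4 y5 k \<and> HornB y1 y2 y3 y4 y5 $ (k+3) $ k = 0 \<and>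
   HornB y1 y2 y3 y4 y5 $ (k+4) $ k = 0"
  using exhaust_5[of k] by (elim disjE) (simp_all add: HornB_entries yv_def)

lemma HornB_col_pat: "pat k (\<chi> i. HornB y1 y2 y3 y4 y5 $ i $ k * z)"
  unfolding pat_def using HornB_col[of y1 y2 y3 y4 y5 k] by (simp add: algebra_simps)

primrec itT :: "(5\<Rightarrow>real) \<Rightarrow> (5\<Rightarrow>real) \<Rightarrow> (5\<Rightarrow>real) \<Rightarrow> nat \<Rightarrow> 5 \<Rightarrow> real" where
  "itT P m R 0 = P"
| "itT P m R (Suc n) = (\<lambda>i. m i - (R (i+4))^2 / itT P m R n (i+4))"

lemma fixed_point:
  fixes P Qv R m :: "5 \<Rightarrow> real"
  assumes R: "\<And>i. R i > 0" and P: "\<And>i. P i \<ge> 0" and Qv: "\<And>i. Qv i \<ge> 0"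
    and CS: "\<And>i. (R i)^2 \<le> P i * Qv i" and m: "\<And>i. m i = P i + Qv (i+4)"
  shows "\<exists>t. (\<forall>i. t i > 0) \<and> (\<forall>i. t i + (R (i+4))^2 / t (i+4) = m i)"
proof -
  have Ppos: "P i > 0" for i
  proof (rule ccontr)
    assume "\<not> P i > 0"
    then have "P i = 0" using P[of i] by simp
    then show False using CS[of i] R[of i] by (simp add: power2_eq_square)
         (metis mult_pos_pos not_less)
  qed
  have RP: "(R i)^2 / P i \<le> Qv i" for i
    using CS[of i] Ppos[of i] by (simp add: divide_le_eq mult.commute)
  let ?it = "itT P m R"
  have ge: "P i \<le> ?it n i" for n i
  proof (induct n arbitrary: i)
    case 0 then show ?case by simp
  next
    case (Suc n)
    have pos: "0 < ?it n (i+4)" using Suc[of "i+4"] Ppos[of "i+4"] by linarith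
    have "(R (i+4))^2 / ?it n (i+4) \<le> (R (i+4))^2 / P (i+4)"
      using Suc[of "i+4"] Ppos[of "i+4"] by (intro divide_left_mono) auto
    then show ?case using RP[of "i+4"] m[of i] by simp
  qed
  have itpos: "0 < ?it n i" for n i using ge[of i n] Ppos[of i] by linarith
  have inc: "?it n i \<le> ?it (Suc n) i" for n i
  proof (induct n arbitrary: i)
    case 0 then show ?case using ge[of i 1] by simp
  next
    case (Suc n)
    have "(R (i+4))^2 / ?it (Suc n) (i+4) \<le> (R (i+4))^2 / ?it n (i+4)"
      using Suc[of "i+4"] itpos[of n "i+4"] by (intro divide_left_mono) auto
    then show ?case by simp
  qed
  have bnd: "?it n i \<le> m i" for n i
  proof (cases n)
    case 0 then show ?thesis using m[of i] Qv[of "i+4"] by simp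
  next
    case (Suc n')
    have "0 \<le> (R (i+4))^2 / ?it n' (i+4)" using itpos[of n' "i+4"] by simp
    then show ?thesis using Suc by simp
  qed
  have conv: "\<exists>L. (\<lambda>n. ?it n i) \<longlonglongrightarrow> L" for i
  proof -
    have "incseq (\<lambda>n. ?it n i)" using inc by (simp add: incseq_SucI)
    moreover have "bdd_above (range (\<lambda>n. ?it n i))" by (rule bdd_aboveI[of _ "m i"]) (use bnd in auto)
    ultimately show ?thesis using LIMSEQ_incseq_SUP by blast
  qed
  then obtain L where L: "\<And>i. (\<lambda>n. ?it n i) \<longlonglongrightarrow> L i" by metis
  have Lpos: "L i > 0" for i
  proof -
    have "P i \<le> L i" using L[of i] ge by (intro LIMSEQ_le_const) auto
    then show ?thesis using Ppos[of i] by linarith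
  qed
  have eq: "L i + (R (i+4))^2 / L (i+4) = m i" for i
  proof -
    have "(\<lambda>n. ?it (Suc n) i) \<longlonglongrightarrow> L i" using L[of i] by (rule LIMSEQ_Suc)
    moreover have "(\<lambda>n. ?it (Suc n) i) \<longlonglongrightarrow> m i - (R (i+4))^2 / L (i+4)"
      unfolding itT.simps using L[of "i+4"] Lpos[of "i+4"]
      by (intro tendsto_intros) auto
    ultimately have "L i = m i - (R (i+4))^2 / L (i+4)" by (rule LIMSEQ_unique)
    then show ?thesis by simp
  qed
  show ?thesis using Lpos eq by blast
qed


lemma interior_perturb:
  assumes "A \<in> (top_of_set Sym5) interior_of S" "E \<in> Sym5"
  shows "\<exists>\<delta>>0. A - \<delta> *\<^sub>R E \<in> S"
proof -
  obtain T where T: "openin (top_of_set Sym5) T" "A \<in> T" "T \<subseteq> S"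
    using assms(1) unfolding interior_of_def by blast
  obtain V where V: "open V" "T = Sym5 \<inter> V" using T(1) openin_open by blast
  have AV: "A \<in> V" "A \<in> Sym5" using T(2) V(2) by auto
  obtain e where e: "e > 0" "ball A e \<subseteq> V" using V(1) AV(1) open_contains_ball by blast
  define \<delta> where "\<delta> = e / (2 * (norm E + 1))"
  have "2 * (norm E + 1) > 0" by (smt (verit) norm_ge_zero)
  then have dpos: "\<delta> > 0" unfolding \<delta>_def using e(1) by (simp add: divide_pos_pos)
  have "\<delta> * norm E < e"
  proof -
    have "\<delta> * norm E \<le> \<delta> * (norm E + 1)" using dpos by simp
    also have "\<dots> = e / 2"
    proof -
      have nz: "norm E + 1 \<noteq> 0" by (smt (verit) norm_ge_zero)
      show ?thesis unfolding \<delta>_def using nz by (simp add: field_simps)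
    qed
    finally show ?thesis using e(1) by simp
  qed
  then have "A - \<delta> *\<^sub>R E \<in> ball A e" using dpos by (simp add: dist_norm)
  then have "A - \<delta> *\<^sub>R E \<in> V" using e(2) by blast
  moreover have "A - \<delta> *\<^sub>R E \<in> Sym5" using AV(2) assms(2) unfolding Sym5_iff by simp
  ultimately have "A - \<delta> *\<^sub>R E \<in> S" using V(2) T(3) by blast
  then show ?thesis using dpos by blast
qed

lemma interior_DNN_pos:
  assumes "A \<in> (top_of_set Sym5) interior_of DNN5"
  shows "A$i$j > 0"
proof -
  define E :: mat5 where "E = (\<chi> p q. if (p = i \<and> q = j) \<or> (p = j \<and> q = i) then 1 else 0)"
  have "E \<in> Sym5" unfolding Sym5_iff E_def by auto
  then obtain \<delta> where d: "\<delta> > 0" "A - \<delta> *\<^sub>R E \<in> DNN5" using interior_perturb[OF assms] by blast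
  then have "0 \<le> (A - \<delta> *\<^sub>R E) $ i $ j" unfolding DNN5_def by blast
  then have "0 \<le> A$i$j - \<delta>" unfolding E_def by simp
  then show ?thesis using d(1) by simp
qed

lemma frontier_CP:
  assumes "A \<in> (top_of_set Sym5) frontier_of CP5"
  shows "A \<in> CP5"
proof -
  have "A \<in> (top_of_set Sym5) closure_of CP5" using assms unfolding frontier_of_def by blast
  then have "A \<in> euclidean closure_of CP5" by (rule subsetD[OF closure_of_subtopology_subset])
  then show ?thesis using closed_CP5 by (simp add: closure_closed)
qed

lemma inner_DHD_sum:
  assumes "A = (\<Sum>l<k. outer (b l))"
  shows "inner5 A (diag5 e ** Horn ** diag5 e) = (\<Sum>l<k. Q (\<chi> i. e i * b l $ i))"
  unfolding assms inner5_sum_left inner_outer_DHD ..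

lemma CP_inner_nonneg:
  assumes "A \<in> CP5" "\<And>i. 0 \<le> e i"
  shows "0 \<le> inner5 A (diag5 e ** Horn ** diag5 e)"
proof -
  obtain k :: nat and b where b: "\<forall>l<k. \<forall>i. 0 \<le> b l $ i" "A = (\<Sum>l<k. outer (b l))"
    using assms(1) CP5_alt by blast
  show ?thesis unfolding inner_DHD_sum[OF b(2)]
    by (rule sum_nonneg, rule Q_nonneg) (use b(1) assms(2) in simp)
qed


lemma yv_eq: "yv (f 1) (f 2) (f 3) (f 4) (f 5) i = f i"
  using exhaust_5[of i] unfolding yv_def by (elim disjE) simp_all

definition Hw :: "(5 \<Rightarrow> real) \<Rightarrow> (5 \<Rightarrow> real) \<Rightarrow> 5 \<Rightarrow> real^5" where
  "Hw yy a k = (\<chi> i. HornB (yy 1) (yy 2) (yy 3) (yy 4) (yy 5) $ i $ k * a k)"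

lemma Hw_pat: "pat k (Hw yy a k)"
  unfolding Hw_def by (rule HornB_col_pat)

lemma Hw_vals: "Hw yy a k $ k = a k" "Hw yy a k $ (k+2) = yy k * a k"
  unfolding Hw_def using HornB_col[of "yy 1" "yy 2" "yy 3" "yy 4" "yy 5" k]
  by (simp_all add: yv_eq)

lemma N_e2: "(\<Sum>k\<in>UNIV. outer (Hw yy a k)) $ i $ (i+2) = a i * (yy i * a i)"
proof -
  have "(\<Sum>k\<in>UNIV. outer (Hw yy a k)) $ i $ (i+2) = (\<Sum>k\<in>UNIV. Hw yy a k $ i * Hw yy a k $ (i+2))"
    unfolding outer_def by simp
  also have "\<dots> = (\<Sum>k\<in>UNIV. if k = i then Hw yy a k $ k * Hw yy a k $ (k+2) else 0)"
    by (rule sum.cong[OF refl], rule pat_F1[OF Hw_pat])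
  also have "\<dots> = a i * (yy i * a i)" by (simp add: Hw_vals)
  finally show ?thesis .
qed

lemma N_e1: "(\<Sum>k\<in>UNIV. outer (Hw yy a k)) $ i $ (i+1) - (\<Sum>k\<in>UNIV. outer (Hw yy a k)) $ i $ (i+2)
   - (\<Sum>k\<in>UNIV. outer (Hw yy a k)) $ (i+4) $ (i+1) = (a i)^2 + (yy (i+4) * a (i+4))^2"
proof -
  let ?w = "Hw yy a"
  have "(\<Sum>k\<in>UNIV. outer (?w k)) $ i $ (i+1) - (\<Sum>k\<in>UNIV. outer (?w k)) $ i $ (i+2)
   - (\<Sum>k\<in>UNIV. outer (?w k)) $ (i+4) $ (i+1) =
     (\<Sum>k\<in>UNIV. ?w k $ i * ?w k $ (i+1) - ?w k $ i * ?w k $ (i+2) - ?w k $ (i+4) * ?w k $ (i+1))"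
    unfolding outer_def by (simp add: sum_subtractf)
  also have "\<dots> = (\<Sum>k\<in>UNIV. (if k = i then (?w k $ k)^2 else 0) + (if k = i+4 then (?w k $ (k+2))^2 else 0))"
    by (rule sum.cong[OF refl], rule pat_F2[OF Hw_pat])
  also have "\<dots> = (a i)^2 + (yy (i+4) * a (i+4))^2"
  proof -
    have "Hw yy a (i+4) $ (i+1) = yy (i+4) * a (i+4)" using Hw_vals(2)[of yy a "i+4"] by simp
    then show ?thesis by (simp add: sum.distrib Hw_vals)
  qed
  finally show ?thesis .
qed

lemma phi5_entry:
  "phi5 (diag5 dd ** (HornB (yy 1) (yy 2) (yy 3) (yy 4) (yy 5) ** diag5 a)) $ i $ j
     = dd i * dd j * (\<Sum>k\<in>UNIV. outer (Hw yy a k)) $ i $ j"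
proof -
  let ?X = "diag5 dd ** (HornB (yy 1) (yy 2) (yy 3) (yy 4) (yy 5) ** diag5 a)"
  have X: "?X $ p $ q = dd p * Hw yy a q $ p" for p q
    unfolding Hw_def by (simp add: diag_mult_left diag_mult_right)
  have "phi5 ?X $ i $ j = (\<Sum>k\<in>UNIV. ?X $ i $ k * ?X $ j $ k)"
    unfolding phi5_def matrix_matrix_mult_def transpose_def by simp
  also have "\<dots> = (\<Sum>k\<in>UNIV. dd i * dd j * (Hw yy a k $ i * Hw yy a k $ j))"
    unfolding X by (simp add: mult_ac)
  also have "\<dots> = dd i * dd j * (\<Sum>k\<in>UNIV. outer (Hw yy a k)) $ i $ j"
    unfolding outer_def by (simp add: sum_distrib_left)
  finally show ?thesis .
qed


lemma V_sub: assumes "A \<in> V_Horn" shows "A \<in> phi5 ` Z_Horn"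
proof -
  have fr: "A \<in> (top_of_set Sym5) frontier_of CP5"
    and int: "A \<in> (top_of_set Sym5) interior_of DNN5"
    and ex: "\<exists>d. (\<forall>i. d i > 0) \<and> inner5 A (diag5 d ** Horn ** diag5 d) = 0"
    using assms unfolding V_Horn_def by auto
  have cp: "A \<in> CP5" using fr by (rule frontier_CP)
  obtain k :: nat and b where b: "\<forall>l<k. \<forall>i. 0 \<le> b l $ i" "A = (\<Sum>l<k. outer (b l))"
    using cp CP5_alt by blast
  have Apos: "A$i$j > 0" for i j using int by (rule interior_DNN_pos)
  obtain d where d: "\<forall>i. d i > 0" "inner5 A (diag5 d ** Horn ** diag5 d) = 0" using ex by blast
  define x where "x l = (\<chi> i. d i * b l $ i)" for l
  have xnn: "0 \<le> x l $ i" if "l < k" for l i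
    unfolding x_def using b(1) d(1) that by (simp add: less_imp_le)
  have Qs: "(\<Sum>l<k. Q (x l)) = 0" using d(2) unfolding inner_DHD_sum[OF b(2)] x_def .
  have Qz: "Q (x l) = 0" if "l < k" for l
  proof -
    have "\<forall>l\<in>{..<k}. Q (x l) = 0"
      using Qs by (subst sum_nonneg_eq_0_iff[symmetric]) (auto intro!: Q_nonneg xnn)
    then show ?thesis using that by simp
  qed
  have pats: "\<forall>l<k. \<exists>s. pat s (x l)"
    using Qz xnn by (auto intro!: Q_zero)
  define M where "M = (\<Sum>l<k. outer (x l))"
  have Ment: "M$i$j = d i * A$i$j * d j" for i j
  proof -
    have "M$i$j = (\<Sum>l<k. (d i * b l $ i) * (d j * b l $ j))" unfolding M_def outer_sum_entry x_def by simp
    also have "\<dots> = d i * (\<Sum>l<k. b l $ i * b l $ j) * d j"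
      by (simp add: sum_distrib_left sum_distrib_right mult_ac)
    also have "\<dots> = d i * A$i$j * d j" unfolding b(2) outer_sum_entry ..
    finally show ?thesis .
  qed
  obtain P Qv where PQ: "\<forall>i. P i \<ge> 0" "\<forall>i. Qv i \<ge> 0" "\<forall>i. (M$i$(i+2))^2 \<le> P i * Qv i"
     "\<forall>i. M$i$(i+1) - M$i$(i+2) - M$(i+4)$(i+1) = P i + Qv (i+4)"
    using face_decomp[OF pats M_def] by blast
  define R where "R i = M$i$(i+2)" for i
  define m where "m i = M$i$(i+1) - M$i$(i+2) - M$(i+4)$(i+1)" for i
  have Rpos: "R i > 0" for i unfolding R_def Ment using d(1) Apos by simp
  obtain t where t: "\<forall>i. t i > 0" "\<forall>i. t i + (R (i+4))^2 / t (i+4) = m i"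
    using fixed_point[of R P Qv m] Rpos PQ unfolding R_def m_def by auto
  define a where "a i = sqrt (t i)" for i
  define yy where "yy i = (R i / a i) / a i" for i
  define dd where "dd i = 1 / d i" for i
  have apos: "a i > 0" for i unfolding a_def using t(1) by simp
  have asq: "(a i)^2 = t i" for i unfolding a_def using t(1) by (simp add: less_imp_le)
  have yypos: "yy i > 0" for i unfolding yy_def using apos Rpos by simp
  define X where "X = diag5 dd ** (HornB (yy 1) (yy 2) (yy 3) (yy 4) (yy 5) ** diag5 a)"
  have XZ: "X \<in> Z_Horn"
  proof -
    have "(\<forall>i. dd i > 0) \<and> (\<forall>i. a i > 0) \<and> yy 1 > 0 \<and> yy 2 > 0 \<and> yy 3 > 0 \<and> yy 4 > 0 \<and> yy 5 > 0"
      using d(1) apos yypos unfolding dd_def by simp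
    then show ?thesis unfolding Z_Horn_def X_def
      by (intro CollectI exI[of _ dd] exI[of _ "yy 1"] exI[of _ "yy 2"] exI[of _ "yy 3"] exI[of _ "yy 4"]
          exI[of _ "yy 5"] exI[of _ a]) simp
  qed
  define N where "N = (\<Sum>k\<in>UNIV. outer (Hw yy a k))"
  have NM: "N = M"
  proof (rule face_eq)
    show "N$i$j = N$j$i" for i j unfolding N_def by (rule outer_sum_sym)
    show "M$i$j = M$j$i" for i j unfolding M_def by (rule outer_sum_sym)
    show "N$i$i = N$i$(i+1) + N$(i+4)$i - N$i$(i+2) - N$(i+3)$i" for i
      unfolding N_def by (rule face_diag) (auto intro: Hw_pat)
    show "M$i$i = M$i$(i+1) + M$(i+4)$i - M$i$(i+2) - M$(i+3)$i" for i
      unfolding M_def by (rule face_diag) (use pats in auto)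
    have e2: "N$i$(i+2) = M$i$(i+2)" for i
    proof -
      have "N$i$(i+2) = a i * (yy i * a i)" unfolding N_def by (rule N_e2)
      also have "\<dots> = R i" unfolding yy_def using apos[of i] by simp
      finally show ?thesis unfolding R_def .
    qed
    then show "N$i$(i+2) = M$i$(i+2)" for i .
    show "N$i$(i+1) = M$i$(i+1)" for i
    proof -
      have "N$i$(i+1) - N$i$(i+2) - N$(i+4)$(i+1) = (a i)^2 + (yy (i+4) * a (i+4))^2"
        unfolding N_def by (rule N_e1)
      also have "\<dots> = t i + (R (i+4))^2 / t (i+4)"
      proof -
        have "yy (i+4) * a (i+4) = R (i+4) / a (i+4)" unfolding yy_def using apos[of "i+4"] by simp
        then have "(yy (i+4) * a (i+4))^2 = (R (i+4))^2 / t (i+4)" by (simp add: power_divide asq)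
        then show ?thesis using asq[of i] by simp
      qed
      also have "\<dots> = m i" using t(2) by simp
      finally have "N$i$(i+1) - N$i$(i+2) - N$(i+4)$(i+1) = m i" .
      moreover have "N$(i+4)$(i+1) = M$(i+4)$(i+1)" using e2[of "i+4"] by simp
      ultimately show ?thesis using e2[of i] unfolding m_def by simp
    qed
  qed
  have "phi5 X = A"
  proof -
    have "phi5 X $ i $ j = A $ i $ j" for i j
    proof -
      have "phi5 X $ i $ j = dd i * dd j * N $ i $ j" unfolding X_def N_def by (rule phi5_entry)
      also have "\<dots> = dd i * dd j * (d i * A$i$j * d j)" unfolding NM Ment ..
      also have "\<dots> = A$i$j"
      proof -
        have "d i \<noteq> 0" "d j \<noteq> 0" using d(1) by (metis less_irrefl)+
        then show ?thesis unfolding dd_def by (simp add: field_simps)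
      qed
      finally show ?thesis .
    qed
    then show ?thesis by (simp add: vec_eq_iff)
  qed
  then show ?thesis using XZ by blast
qed

lemma cyc_inj:
  fixes w1 w2 w3 w4 w5 y1 y2 y3 y4 y5 :: real
  assumes y: "y1 > 0" "y2 > 0" "y3 > 0" "y4 > 0" "y5 > 0"
    and e1: "w1 + (y1+1) * w2 + y1 * w3 = 0"
    and e2: "w2 + (y2+1) * w3 + y2 * w4 = 0"
    and e3: "w3 + (y3+1) * w4 + y3 * w5 = 0"
    and e4: "w4 + (y4+1) * w5 + y4 * w1 = 0"
    and e5: "w5 + (y5+1) * w1 + y5 * w2 = 0"
  shows "w1 = 0 \<and> w2 = 0 \<and> w3 = 0 \<and> w4 = 0 \<and> w5 = 0"
proof -
  define u1 where "u1 = w1 + w2"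
  define u2 where "u2 = w2 + w3"
  define u3 where "u3 = w3 + w4"
  define u4 where "u4 = w4 + w5"
  define u5 where "u5 = w5 + w1"
  have f1: "u1 = - y1 * u2" using e1 unfolding u1_def u2_def by (simp add: algebra_simps)
  have f2: "u2 = - y2 * u3" using e2 unfolding u2_def u3_def by (simp add: algebra_simps)
  have f3: "u3 = - y3 * u4" using e3 unfolding u3_def u4_def by (simp add: algebra_simps)
  have f4: "u4 = - y4 * u5" using e4 unfolding u4_def u5_def by (simp add: algebra_simps)
  have f5: "u5 = - y5 * u1" using e5 unfolding u5_def u1_def by (simp add: algebra_simps)
  have g2: "u1 = y1*y2*u3" using f1 f2 by simp
  have g3: "u1 = -(y1*y2*y3)*u4" using g2 f3 by simp
  have g4: "u1 = y1*y2*y3*y4*u5" using g3 f4 by simp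
  have g5: "u1 = y1*y2*y3*y4*(- y5 * u1)" using g4 unfolding f5 .
  then have "u1 * (1 + y1 * y2 * y3 * y4 * y5) = 0" by (simp add: algebra_simps)
  moreover have "1 + y1 * y2 * y3 * y4 * y5 > 0" using y by (simp add: add_pos_pos)
  ultimately have u1: "u1 = 0" by simp
  have u5: "u5 = 0" using f5 u1 by simp
  have u4: "u4 = 0" using f4 u5 by simp
  have u3: "u3 = 0" using f3 u4 by simp
  have u2: "u2 = 0" using f2 u3 by simp
  have "w1 = 0" using u1 u2 u3 u4 u5 unfolding u1_def u2_def u3_def u4_def u5_def by linarith
  then show ?thesis using u1 u2 u3 u4 u5 unfolding u1_def u2_def u3_def u4_def u5_def by linarith
qed


lemma quad_outer: "x \<bullet> ((\<Sum>k\<in>UNIV. outer (v k)) *v x) = (\<Sum>k\<in>(UNIV::5 set). (v k \<bullet> x)^2)"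
proof -
  have "x \<bullet> ((\<Sum>k\<in>UNIV. outer (v k)) *v x) = (\<Sum>i\<in>UNIV. \<Sum>j\<in>UNIV. \<Sum>k\<in>UNIV. (v k$i * x$i) * (v k$j * x$j))"
    unfolding inner_vec_def matrix_vector_mult_def outer_def
    by (simp add: sum_distrib_left sum_distrib_right mult_ac)
  also have "\<dots> = (\<Sum>i\<in>UNIV. \<Sum>k\<in>UNIV. \<Sum>j\<in>UNIV. (v k$i * x$i) * (v k$j * x$j))"
    by (rule sum.cong[OF refl], rule sum.swap)
  also have "\<dots> = (\<Sum>k\<in>UNIV. \<Sum>i\<in>UNIV. \<Sum>j\<in>UNIV. (v k$i * x$i) * (v k$j * x$j))"
    by (rule sum.swap)
  also have "\<dots> = (\<Sum>k\<in>(UNIV::5 set). (v k \<bullet> x)^2)"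
    unfolding inner_vec_def power2_eq_square sum_product by (simp add: mult_ac)
  finally show ?thesis .
qed

lemma entry_le_norm: "\<bar>(M::mat5) $ i $ j\<bar> \<le> norm M"
proof -
  have "\<bar>M $ i $ j\<bar> \<le> norm (M $ i)" by (rule component_le_norm_cart)
  also have "\<dots> \<le> norm M" by (rule Finite_Cartesian_Product.norm_nth_le)
  finally show ?thesis .
qed

lemma quad_bound: "\<bar>x \<bullet> ((M::mat5) *v x)\<bar> \<le> 25 * norm M * (norm x)^2"
proof -
  have "\<bar>x \<bullet> (M *v x)\<bar> \<le> norm x * norm (M *v x)" by (rule Cauchy_Schwarz_ineq2)
  also have "norm (M *v x) \<le> onorm ((*v) M) * norm x" by (rule onorm) simp
  also have "onorm ((*v) M) \<le> real CARD(5) * real CARD(5) * norm M"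
    by (rule onorm_le_matrix_component) (rule entry_le_norm)
  finally have "\<bar>x \<bullet> (M *v x)\<bar> \<le> norm x * (real CARD(5) * real CARD(5) * norm M * norm x)"
    by (simp add: mult_left_mono mult_right_mono)
  then show ?thesis by (simp add: power2_eq_square mult_ac)
qed

lemma pd_interior:
  assumes sym: "A \<in> Sym5" and pos: "\<And>i j. A$i$j > 0" and c: "c > 0"
    and pd: "\<And>x. x \<bullet> (A *v x) \<ge> c * (norm x)^2"
  shows "A \<in> (top_of_set Sym5) interior_of DNN5"
proof -
  define S where "S = (\<lambda>p. A $ fst p $ snd p) ` (UNIV :: (5 \<times> 5) set)"
  define amin where "amin = Min S"
  have finS: "finite S" "S \<noteq> {}" unfolding S_def by auto
  have amin_pos: "amin > 0" unfolding amin_def using finS pos by (subst Min_gr_iff) (auto simp: S_def)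
  have amin_le: "amin \<le> A$i$j" for i j unfolding amin_def using finS
    by (intro Min_le) (auto simp: S_def intro: image_eqI[of _ _ "(i,j)"])
  define r where "r = min (c / 25) amin"
  have rpos: "r > 0" unfolding r_def using c amin_pos by simp
  let ?T = "Sym5 \<inter> ball A r"
  have op: "openin (top_of_set Sym5) ?T" by (rule openin_open_Int) simp
  have AT: "A \<in> ?T" using sym rpos by simp
  have TD: "?T \<subseteq> DNN5"
  proof
    fix B assume B: "B \<in> ?T"
    then have Bs: "B \<in> Sym5" and dB: "norm (B - A) < r" by (auto simp: dist_norm norm_minus_commute)
    have ent: "B$i$j \<ge> 0" for i j
    proof -
      have "\<bar>(B - A)$i$j\<bar> \<le> norm (B - A)" by (rule entry_le_norm)
      then have "A$i$j - B$i$j < r" using dB by simp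
      then show ?thesis using amin_le[of i j] unfolding r_def by simp
    qed
    have psd: "x \<bullet> (B *v x) \<ge> 0" for x
    proof -
      have eq: "x \<bullet> (B *v x) = x \<bullet> (A *v x) + x \<bullet> ((B - A) *v x)"
        by (simp add: matrix_vector_mult_diff_rdistrib inner_diff_right)
      have "\<bar>x \<bullet> ((B - A) *v x)\<bar> \<le> 25 * norm (B - A) * (norm x)^2" by (rule quad_bound)
      also have "\<dots> \<le> c * (norm x)^2"
      proof -
        have "25 * norm (B - A) \<le> c" using dB unfolding r_def by simp
        then show ?thesis by (simp add: mult_right_mono)
      qed
      finally show ?thesis using eq pd[of x] by linarith
    qed
    show "B \<in> DNN5" unfolding DNN5_def psd5_def using Bs ent psd by simp
  qed
  show ?thesis unfolding interior_of_def using op AT TD by blast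
qed

lemma CP5_Sym: "CP5 \<subseteq> Sym5"
proof
  fix A assume "A \<in> CP5"
  then obtain k :: nat and b where b: "A = (\<Sum>l<k. outer (b l))" using CP5_alt by blast
  show "A \<in> Sym5" unfolding Sym5_iff b by (intro allI, rule outer_sum_sym)
qed

lemma inner5_diff_left: "inner5 (A - c *\<^sub>R G) G = inner5 A G - c * inner5 G G"
  unfolding inner5_expand by (simp add: algebra_simps sum_subtractf sum_distrib_left)

lemma frontier_from_orth:
  assumes cp: "A \<in> CP5" and e: "\<And>i. e i > 0" and orth: "inner5 A (diag5 e ** Horn ** diag5 e) = 0"
  shows "A \<in> (top_of_set Sym5) frontier_of CP5"
proof -
  let ?G = "diag5 e ** Horn ** diag5 e"
  have cl: "A \<in> (top_of_set Sym5) closure_of CP5"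
    using closure_of_subset[of CP5 "top_of_set Sym5"] CP5_Sym cp by auto
  have "A \<notin> (top_of_set Sym5) interior_of CP5"
  proof
    assume "A \<in> (top_of_set Sym5) interior_of CP5"
    moreover have "?G \<in> Sym5"
    proof -
      have "Horn $ i $ j = Horn $ j $ i" for i j
        using exhaust_5[of i] exhaust_5[of j] unfolding Horn_def by (elim disjE) simp_all
      then show ?thesis unfolding Sym5_iff DHD_entry by (simp add: mult_ac)
    qed
    ultimately obtain \<delta> where d: "\<delta> > 0" "A - \<delta> *\<^sub>R ?G \<in> CP5" using interior_perturb by blast
    have "0 \<le> inner5 (A - \<delta> *\<^sub>R ?G) ?G" using d(2) e by (intro CP_inner_nonneg) (auto simp: less_imp_le)
    also have "\<dots> = - \<delta> * inner5 ?G ?G" unfolding inner5_diff_left orth by simp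
    finally have le: "\<delta> * inner5 ?G ?G \<le> 0" by simp
    have "inner5 ?G ?G = (\<Sum>i\<in>UNIV. \<Sum>j\<in>UNIV. (?G$i$j)^2)" unfolding inner5_expand power2_eq_square ..
    moreover have "(\<Sum>i\<in>UNIV. \<Sum>j\<in>UNIV. (?G$i$j)^2) \<ge> (\<Sum>j\<in>UNIV. (?G$1$j)^2)"
      by (rule member_le_sum) (auto intro: sum_nonneg)
    moreover have "(\<Sum>j\<in>UNIV. (?G$1$j)^2) \<ge> (?G$1$1)^2"
      by (rule member_le_sum) auto
    moreover have "(?G$1$1)^2 > 0" unfolding DHD_entry using e[of 1] by (simp add: Horn_def)
    ultimately have "inner5 ?G ?G > 0" by linarith
    then show False using le d(1) by (simp add: mult_le_0_iff)
  qed
  then show ?thesis unfolding frontier_of_def using cl by blast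
qed


lemma HornB_nonneg: assumes "y1 > 0" "y2 > 0" "y3 > 0" "y4 > 0" "y5 > 0"
  shows "0 \<le> HornB y1 y2 y3 y4 y5 $ i $ j"
  using exhaust_5[of i] exhaust_5[of j] assms by (elim disjE) (simp_all add: HornB_entries)

lemma HornB_common: assumes "y1 > 0" "y2 > 0" "y3 > 0" "y4 > 0" "y5 > 0"
  shows "\<exists>k. HornB y1 y2 y3 y4 y5 $ i $ k > 0 \<and> HornB y1 y2 y3 y4 y5 $ j $ k > 0"
  using exhaust_5[of i] exhaust_5[of j] assms unfolding ex_5
  by (elim disjE) (simp_all add: HornB_entries)

lemma HornB_yv: "HornB (yv y1 y2 y3 y4 y5 1) (yv y1 y2 y3 y4 y5 2) (yv y1 y2 y3 y4 y5 3)
   (yv y1 y2 y3 y4 y5 4) (yv y1 y2 y3 y4 y5 5) = HornB y1 y2 y3 y4 y5"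
  by (simp add: yv_def)

lemma Z_sup: assumes "X \<in> Z_Horn" shows "phi5 X \<in> V_Horn"
proof -
  obtain d y1 y2 y3 y4 y5 z where X: "X = diag5 d ** (HornB y1 y2 y3 y4 y5 ** diag5 z)"
    and d: "\<forall>i. d i > 0" and z: "\<forall>i. z i > 0"
    and y: "y1 > 0" "y2 > 0" "y3 > 0" "y4 > 0" "y5 > 0"
    using assms unfolding Z_Horn_def by blast
  define yy where "yy = yv y1 y2 y3 y4 y5"
  have X': "X = diag5 d ** (HornB (yy 1) (yy 2) (yy 3) (yy 4) (yy 5) ** diag5 z)"
    unfolding X yy_def HornB_yv ..
  define v where "v k = (\<chi> i. d i * Hw yy z k $ i)" for k
  define A where "A = phi5 X"
  have Aent: "A $ i $ j = (\<Sum>k\<in>UNIV. v k $ i * v k $ j)" for i j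
  proof -
    have "A $ i $ j = d i * d j * (\<Sum>k\<in>UNIV. outer (Hw yy z k)) $ i $ j"
      unfolding A_def X' by (rule phi5_entry)
    also have "\<dots> = (\<Sum>k\<in>UNIV. v k $ i * v k $ j)"
      unfolding outer_def v_def by (simp add: sum_distrib_left mult_ac)
    finally show ?thesis .
  qed
  have Aeq: "A = (\<Sum>k\<in>UNIV. outer (v k))"
    using Aent unfolding outer_def by (simp add: vec_eq_iff)
  have Hwv: "Hw yy z k $ i = HornB y1 y2 y3 y4 y5 $ i $ k * z k" for k i
    unfolding Hw_def yy_def HornB_yv by simp
  have vnn: "0 \<le> v k $ i" for k i
    unfolding v_def Hwv using d z HornB_nonneg[OF y, of i k] by (simp add: less_imp_le)
  have cp: "A \<in> CP5"
  proof -
    have o: "outer (v k) \<in> CP5" for k by (rule CP5_outer) (rule vnn)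
    show ?thesis unfolding Aeq sum_5 by (intro CP5_add o)
  qed
  define e where "e i = 1 / d i" for i
  have epos: "e i > 0" for i unfolding e_def using d by simp
  have orth: "inner5 A (diag5 e ** Horn ** diag5 e) = 0"
  proof -
    have "inner5 A (diag5 e ** Horn ** diag5 e) = (\<Sum>k\<in>UNIV. Q (\<chi> i. e i * v k $ i))"
      unfolding Aeq inner5_sum_left inner_outer_DHD ..
    also have "\<dots> = (\<Sum>k\<in>(UNIV::5 set). Q (Hw yy z k))"
    proof -
      have "(\<chi> i. e i * v k $ i) = Hw yy z k" for k
      proof -
        have "e i * (d i * w) = w" for i w
        proof -
          have "d i \<noteq> 0" using d[rule_format, of i] by simp
          then show ?thesis unfolding e_def by (simp add: field_simps)
        qed
        then show ?thesis unfolding v_def by (simp add: vec_eq_iff)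
      qed
      then show ?thesis by simp
    qed
    also have "\<dots> = 0" by (simp add: pat_Q[OF Hw_pat])
    finally show ?thesis .
  qed
  have Asym: "A \<in> Sym5" unfolding Sym5_iff Aeq by (intro allI, rule outer_sum_sym)
  have Apos: "A $ i $ j > 0" for i j
  proof -
    obtain k where k: "HornB y1 y2 y3 y4 y5 $ i $ k > 0" "HornB y1 y2 y3 y4 y5 $ j $ k > 0"
      using HornB_common[OF y] by blast
    have "v k $ i * v k $ j > 0" unfolding v_def Hwv using k d z by simp
    also have "v k $ i * v k $ j \<le> (\<Sum>k\<in>UNIV. v k $ i * v k $ j)"
      by (rule member_le_sum) (auto intro: mult_nonneg_nonneg vnn)
    finally show ?thesis unfolding Aent .
  qed
  define V :: mat5 where "V = (\<chi> k i. v k $ i)"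
  have Vx: "(V *v x) $ k = v k \<bullet> x" for x k
    unfolding V_def matrix_vector_mult_def inner_vec_def by simp
  have lin: "linear ((*v) V)" by simp
  have inj: "inj ((*v) V)"
    unfolding linear_injective_0[OF lin]
  proof (intro allI impI)
    fix x assume x0: "V *v x = 0"
    define w where "w i = d i * x $ i" for i
    have eqk: "(\<Sum>i\<in>UNIV. HornB y1 y2 y3 y4 y5 $ i $ k * w i) = 0" for k
    proof -
      have "0 = (V *v x) $ k" using x0 by simp
      also have "\<dots> = z k * (\<Sum>i\<in>UNIV. HornB y1 y2 y3 y4 y5 $ i $ k * w i)"
        unfolding Vx inner_vec_def v_def Hwv w_def by (simp add: sum_distrib_left mult_ac)
      finally show ?thesis using z[rule_format, of k] by simp
    qed
    have "w 1 = 0 \<and> w 2 = 0 \<and> w 3 = 0 \<and> w 4 = 0 \<and> w 5 = 0"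
    proof (rule cyc_inj[OF y])
      show "w 1 + (y1 + 1) * w 2 + y1 * w 3 = 0" using eqk[of 1] by (simp add: sum_5 HornB_entries mult_ac)
      show "w 2 + (y2 + 1) * w 3 + y2 * w 4 = 0" using eqk[of 2] by (simp add: sum_5 HornB_entries mult_ac)
      show "w 3 + (y3 + 1) * w 4 + y3 * w 5 = 0" using eqk[of 3] by (simp add: sum_5 HornB_entries mult_ac)
      show "w 4 + (y4 + 1) * w 5 + y4 * w 1 = 0" using eqk[of 4] by (simp add: sum_5 HornB_entries mult_ac add_ac)
      show "w 5 + (y5 + 1) * w 1 + y5 * w 2 = 0" using eqk[of 5] by (simp add: sum_5 HornB_entries mult_ac add_ac)
    qed
    then have "w i = 0" for i using exhaust_5[of i] by auto
    then have "x $ i = 0" for i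
    proof -
      have "d i \<noteq> 0" using d[rule_format, of i] by simp
      then show ?thesis using \<open>\<And>i. w i = 0\<close>[of i] unfolding w_def by simp
    qed
    then show "x = 0" by (simp add: vec_eq_iff)
  qed
  obtain B where B: "B > 0" "\<And>x. B * norm x \<le> norm (V *v x)"
    using linear_inj_bounded_below_pos[OF lin inj] by blast
  have pd: "x \<bullet> (A *v x) \<ge> B^2 * (norm x)^2" for x
  proof -
    have "x \<bullet> (A *v x) = (\<Sum>k\<in>(UNIV::5 set). (v k \<bullet> x)^2)" unfolding Aeq by (rule quad_outer)
    also have "\<dots> = (norm (V *v x))^2"
      unfolding power2_norm_eq_inner inner_vec_def Vx by (simp add: power2_eq_square)
    finally have "x \<bullet> (A *v x) = (norm (V *v x))^2" .
    moreover have "(B * norm x)^2 \<le> (norm (V *v x))^2"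
      using B by (intro power_mono) (auto intro: mult_nonneg_nonneg less_imp_le)
    ultimately show ?thesis by (simp add: power_mult_distrib)
  qed
  have int: "A \<in> (top_of_set Sym5) interior_of DNN5"
    by (rule pd_interior[OF Asym Apos _ pd]) (use B in simp)
  have fr: "A \<in> (top_of_set Sym5) frontier_of CP5"
    by (rule frontier_from_orth[OF cp epos orth])
  show ?thesis unfolding A_def[symmetric] V_Horn_def using fr int orth epos by blast
qed

theorem theorem2p6:
  shows "V_Horn = phi5 ` Z_Horn"
proof
  show "V_Horn \<subseteq> phi5 ` Z_Horn" using V_sub by blast
  show "phi5 ` Z_Horn \<subseteq> V_Horn" using Z_sup by blast
qed

end
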